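(* Let $p\ge0$ be an integer and $0<x<2\pi$. Then $$\sum_{k=1}^\infty\frac{\cos(kx)}{(2k-1)(2k)^{2p}(2k+1)}=\frac12-\frac{\pi}{4}\sin\frac x2-\frac12\sum_{j=1}^p\frac{(-1)^{j+1}\pi^{2j}}{(2j)!}B_{2j}\Big(\frac{x}{2\pi}\Big),$$ $$\sum_{k=1}^\infty\frac{\sin(kx)}{(2k-1)(2k)^{2p+1}(2k+1)}=\frac{\pi}{4}\cos\frac x2-\frac14(\pi-x)-\frac12\sum_{j=1}^p\frac{(-1)^{j+1}\pi^{2j+1}}{(2j+1)!}B_{2j+1}\Big(\frac{x}{2\pi}\Big).$$
   Context: $B_n(y)$ are the Bernoulli polynomials, defined by $\frac{te^{yt}}{e^t-1}=\sum_{k\ge0}B_k(y)\frac{t^k}{k!}$. *)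

theory Defs
  imports "HOL-Analysis.Analysis" "HOL-Computational_Algebra.Formal_Power_Series"
begin

definition bernoulli_poly :: "nat \<Rightarrow> real \<Rightarrow> real" where
  "bernoulli_poly n y = fact n * fps_nth (fps_X * fps_exp y / (fps_exp 1 - 1)) n"

end

theory Submission
  imports Defs
begin

definition Bc :: "real fps" where "Bc = inverse (fps_shift 1 (fps_exp 1 - 1))"

lemma shiftD0: "fps_nth (fps_shift 1 (fps_exp (1::real) - 1)) 0 = 1" by simp

lemma Bc_mult: "Bc * fps_shift 1 (fps_exp 1 - 1) = 1"
  unfolding Bc_def by (rule inverse_mult_eq_1) simp

lemma D_eq: "fps_exp (1::real) - 1 = fps_shift 1 (fps_exp 1 - 1) * fps_X"
  by (rule fps_ext) (auto simp: fps_X_mult_right_nth)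

lemma bp_fps: "fps_X * fps_exp y / (fps_exp 1 - 1) = fps_exp y * Bc"
proof -
  have nz: "fps_exp (1::real) - 1 \<noteq> 0"
  proof
    assume "fps_exp (1::real) - 1 = 0"
    hence "fps_nth (fps_exp (1::real) - 1) 1 = 0" by simp
    thus False by simp
  qed
  have "fps_X * fps_exp y = (fps_exp y * Bc) * (fps_exp 1 - 1)"
    by (subst D_eq) (metis Bc_mult mult.assoc mult.commute mult.left_commute mult_1_right)
  thus ?thesis using nz by (metis fps_divide_times_eq)
qed

lemma bp_sum: "bernoulli_poly n y = fact n * (\<Sum>i=0..n. y^i / fact i * fps_nth Bc (n - i))"
  unfolding bernoulli_poly_def bp_fps fps_mult_nth by simp

lemma Bc0: "fps_nth Bc 0 = 1" unfolding Bc_def by simp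

lemma Bc_rec: "(\<Sum>i=0..m. fps_nth Bc i / fact (Suc (m - i))) = (if m = 0 then 1 else 0)"
proof -
  have "fps_nth (Bc * fps_shift 1 (fps_exp 1 - 1)) m = (if m = 0 then 1 else 0)" by (simp only: Bc_mult) simp
  moreover have "fps_nth (Bc * fps_shift 1 (fps_exp 1 - 1)) m = (\<Sum>i=0..m. fps_nth Bc i / fact (Suc (m - i)))"
    unfolding fps_mult_nth by (rule sum.cong) (simp_all add: divide_inverse del: fact_Suc)
  ultimately show ?thesis by simp
qed

lemma Bc1: "fps_nth Bc (Suc 0) = - 1/2"
proof -
  have "(\<Sum>i=0..Suc 0. fps_nth Bc i / fact (Suc (Suc 0 - i))) = 0" using Bc_rec[of "Suc 0"] by simp
  hence "fps_nth Bc 0 / 2 + fps_nth Bc (Suc 0) = 0" by (simp add: sum.atLeast0_atMost_Suc)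
  thus ?thesis by (simp add: Bc0)
qed

lemma bp1: "bernoulli_poly 1 y = y - 1/2"
  by (simp add: bp_sum Bc0 Bc1)

lemma bp_per: assumes "2 \<le> n" shows "bernoulli_poly n 1 = bernoulli_poly n 0"
proof -
  obtain m where m: "n = Suc m" "m \<ge> 1" using assms by (cases n) auto
  have "(\<Sum>i=0..n. 1^i / fact i * fps_nth Bc (n - i)) = (\<Sum>i=0..n. fps_nth Bc i / fact (n - i))"
    by (subst sum.atLeastAtMost_rev) (rule sum.cong, auto)
  also have "\<dots> = (\<Sum>i=0..m. fps_nth Bc i / fact (Suc (m - i))) + fps_nth Bc n"
    using m by (simp add: Suc_diff_le del: fact_Suc)
  also have "\<dots> = fps_nth Bc n" using Bc_rec[of m] m by simp
  finally have 1: "(\<Sum>i=0..n. 1^i / fact i * fps_nth Bc (n - i)) = fps_nth Bc n" .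
  have 0: "(\<Sum>i=0..n. 0^i / fact i * fps_nth Bc (n - i)) = fps_nth Bc n"
    unfolding m(1) by (subst sum.atLeast0_atMost_Suc_shift) simp
  show ?thesis unfolding bp_sum 0 1 ..
qed

lemma bp_Suc_eq: "bernoulli_poly (Suc n) y =
   fact (Suc n) * (fps_nth Bc (Suc n) + (\<Sum>i=0..n. y^Suc i / fact (Suc i) * fps_nth Bc (n - i)))"
  unfolding bp_sum by (subst sum.atLeast0_atMost_Suc_shift) (simp add: o_def del: fact_Suc)

lemma bp_deriv: "(bernoulli_poly (Suc n) has_real_derivative (real (Suc n) * bernoulli_poly n y)) (at y)"
proof -
  have e: "bernoulli_poly (Suc n) = (\<lambda>y. fact (Suc n) * (fps_nth Bc (Suc n) + (\<Sum>i=0..n. y^Suc i / fact (Suc i) * fps_nth Bc (n - i))))"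
    by (rule ext) (rule bp_Suc_eq)
  have "((\<lambda>y. fact (Suc n) * (fps_nth Bc (Suc n) + (\<Sum>i=0..n. y^Suc i / fact (Suc i) * fps_nth Bc (n - i))))
     has_real_derivative fact (Suc n) * (0 + (\<Sum>i=0..n. (real (Suc i) * y^i) / fact (Suc i) * fps_nth Bc (n - i)))) (at y)"
    by (intro derivative_eq_intros DERIV_sum) auto
  also have "fact (Suc n) * (0 + (\<Sum>i=0..n. (real (Suc i) * y^i) / fact (Suc i) * fps_nth Bc (n - i)))
     = real (Suc n) * bernoulli_poly n y"
  proof -
    have "\<And>i. (real (Suc i) * y^i) / fact (Suc i) = y^i / fact i"
    proof -
      fix i
      have "(fact (Suc i)::real) = real (Suc i) * fact i" by simp
      thus "(real (Suc i) * y^i) / fact (Suc i) = y^i / fact i"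
        by (simp del: fact_Suc of_nat_Suc)
    qed
    hence "(\<Sum>i=0..n. (real (Suc i) * y^i) / fact (Suc i) * fps_nth Bc (n - i)) = (\<Sum>i=0..n. y^i / fact i * fps_nth Bc (n - i))"
      by simp
    thus ?thesis unfolding bp_sum by simp
  qed
  finally show ?thesis by (simp only: e)
qed

lemma key:
  fixes f g :: "real \<Rightarrow> real" and a :: real
  assumes cf: "\<And>x. isCont f x" and per: "f 0 = f (2*pi)"
    and df: "\<And>x. 0 < x \<Longrightarrow> x < 2*pi \<Longrightarrow> (f has_real_derivative a * g x) (at x)"
    and dg: "\<And>x. 0 < x \<Longrightarrow> x < 2*pi \<Longrightarrow> (g has_real_derivative 0) (at x)"
    and a: "a \<noteq> 0"
  shows "\<And>x. 0 < x \<Longrightarrow> x < 2*pi \<Longrightarrow> g x = 0"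
proof -
  have "\<exists>c. \<forall>x\<in>{0<..<2*pi}. g x = c"
    by (rule has_field_derivative_zero_constant) (auto intro: has_field_derivative_at_within dg)
  then obtain c where c: "\<And>x. 0 < x \<Longrightarrow> x < 2*pi \<Longrightarrow> g x = c" by auto
  have "\<exists>l z. 0 < z \<and> z < 2*pi \<and> DERIV f z :> l \<and> f (2*pi) - f 0 = (2*pi - 0) * l"
    by (rule MVT) (auto intro: continuous_at_imp_continuous_on cf df real_differentiable_def[THEN iffD2])
  then obtain l z where z: "0 < z" "z < 2*pi" "DERIV f z :> l" "f (2*pi) - f 0 = (2*pi - 0) * l" by blast
  have "l = a * g z" using DERIV_unique[OF z(3) df[OF z(1,2)]] .
  hence "l = a * c" using c z by simp
  with z(4) per a have "c = 0" by simp
  thus "\<And>x. 0 < x \<Longrightarrow> x < 2*pi \<Longrightarrow> g x = 0" using c by simp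
qed

definition den :: "nat \<Rightarrow> nat \<Rightarrow> real" where
  "den m n = (2 * real (Suc n) - 1) * (2 * real (Suc n)) ^ m * (2 * real (Suc n) + 1)"

definition Cf :: "nat \<Rightarrow> real \<Rightarrow> real" where
  "Cf m x = (\<Sum>n. cos (real (Suc n) * x) / den m n)"
definition Sf :: "nat \<Rightarrow> real \<Rightarrow> real" where
  "Sf m x = (\<Sum>n. sin (real (Suc n) * x) / den m n)"

lemma den_ge: "den m n \<ge> (real (Suc n))^2"
proof -
  let ?k = "real (Suc n)"
  have k: "?k \<ge> 1" by simp
  have "(2 * ?k) ^ m \<ge> 1" using k by (intro one_le_power) simp
  moreover have "(2 * ?k - 1) * (2 * ?k + 1) \<ge> ?k^2" using k by (simp add: power2_eq_square algebra_simps)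
  moreover have "(2 * ?k - 1) * (2 * ?k + 1) \<ge> 0" using k by simp
  ultimately have "(2 * ?k - 1) * (2 * ?k + 1) * (2 * ?k) ^ m \<ge> ?k^2 * 1"
    by (intro mult_mono) auto
  thus ?thesis unfolding den_def by (simp add: algebra_simps)
qed

lemma den_pos: "den m n > 0"
  by (rule less_le_trans[OF _ den_ge]) simp

lemma den_Suc: "den (Suc m) n = 2 * real (Suc n) * den m n"
  unfolding den_def by (simp add: algebra_simps)

lemma summable_inv_den: "summable (\<lambda>n. 1 / den m n)"
proof (rule summable_comparison_test)
  show "summable (\<lambda>n. 1 / (real (Suc n))^2)"
    using sums_summable[OF inverse_squares_sums] by simp
  show "\<exists>N. \<forall>n\<ge>N. norm (1 / den m n) \<le> 1 / (real (Suc n))^2"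
    using den_ge den_pos by (intro exI[of _ 0] allI impI) (simp add: frac_le less_imp_le[OF den_pos])
qed

lemma bound_cos: "norm (cos t / den m n) \<le> 1 / den m n"
  using den_pos[of m n] by (simp add: abs_le_iff divide_right_mono abs_divide)
lemma bound_sin: "norm (sin t / den m n) \<le> 1 / den m n"
  using den_pos[of m n] by (simp add: abs_le_iff divide_right_mono abs_divide)

lemma summable_C: "summable (\<lambda>n. cos (real (Suc n) * x) / den m n)"
  by (rule summable_comparison_test[OF _ summable_inv_den]) (use bound_cos in blast)
lemma summable_S: "summable (\<lambda>n. sin (real (Suc n) * x) / den m n)"
  by (rule summable_comparison_test[OF _ summable_inv_den]) (use bound_sin in blast)


lemma Sf_deriv: "(Sf (Suc m) has_real_derivative Cf m x / 2) (at x)"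
proof -
  let ?f = "\<lambda>n x. sin (real (Suc n) * x) / den (Suc m) n"
  let ?f' = "\<lambda>n x. cos (real (Suc n) * x) / den m n / 2"
  have d: "(?f n has_field_derivative ?f' n x) (at x within UNIV)" for n x
  proof -
    have "(?f n has_field_derivative cos (real (Suc n) * x) * real (Suc n) / den (Suc m) n) (at x)"
      using den_pos[of "Suc m" n] by (auto intro!: derivative_eq_intros)
    also have "cos (real (Suc n) * x) * real (Suc n) / den (Suc m) n = ?f' n x"
      unfolding den_Suc using den_pos[of m n] by (simp add: field_simps del: of_nat_Suc)
    finally show ?thesis by simp
  qed
  have u: "uniformly_convergent_on UNIV (\<lambda>n x. \<Sum>i<n. ?f' i x)"
    unfolding uniformly_convergent_on_def
  proof (rule exI, rule Weierstrass_m_test)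
    show "summable (\<lambda>n. 1 / den m n / 2)" using summable_inv_den summable_divide by blast
    show "norm (?f' n x) \<le> 1 / den m n / 2" for n x
    proof -
      have "norm (?f' n x) = norm (cos (real (Suc n) * x) / den m n) / 2" by (simp add: abs_mult)
      also have "\<dots> \<le> 1 / den m n / 2" by (rule divide_right_mono[OF bound_cos]) simp
      finally show ?thesis .
    qed
  qed
  have "((\<lambda>x. \<Sum>n. ?f n x) has_field_derivative (\<Sum>n. ?f' n x)) (at x)"
    by (rule has_field_derivative_series'(2)[OF convex_UNIV d u, of 0]) (auto simp: summable_S)
  moreover have "(\<Sum>n. ?f' n x) = Cf m x / 2"
    unfolding Cf_def by (rule suminf_divide[OF summable_C])
  moreover have "Sf (Suc m) = (\<lambda>x. \<Sum>n. ?f n x)" by (rule ext) (simp only: Sf_def)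
  ultimately show ?thesis by (simp only:)
qed

lemma Cf_deriv: "(Cf (Suc m) has_real_derivative - Sf m x / 2) (at x)"
proof -
  let ?f = "\<lambda>n x. cos (real (Suc n) * x) / den (Suc m) n"
  let ?f' = "\<lambda>n x. - (sin (real (Suc n) * x) / den m n / 2)"
  have d: "(?f n has_field_derivative ?f' n x) (at x within UNIV)" for n x
  proof -
    have "(?f n has_field_derivative - sin (real (Suc n) * x) * real (Suc n) / den (Suc m) n) (at x)"
      using den_pos[of "Suc m" n] by (auto intro!: derivative_eq_intros)
    also have "- sin (real (Suc n) * x) * real (Suc n) / den (Suc m) n = ?f' n x"
      unfolding den_Suc using den_pos[of m n] by (simp add: field_simps del: of_nat_Suc)
    finally show ?thesis by simp
  qed
  have u: "uniformly_convergent_on UNIV (\<lambda>n x. \<Sum>i<n. ?f' i x)"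
    unfolding uniformly_convergent_on_def
  proof (rule exI, rule Weierstrass_m_test)
    show "summable (\<lambda>n. 1 / den m n / 2)" using summable_inv_den summable_divide by blast
    show "norm (?f' n x) \<le> 1 / den m n / 2" for n x
    proof -
      have "norm (?f' n x) = norm (sin (real (Suc n) * x) / den m n) / 2" by (simp add: abs_mult)
      also have "\<dots> \<le> 1 / den m n / 2" by (rule divide_right_mono[OF bound_sin]) simp
      finally show ?thesis .
    qed
  qed
  have "((\<lambda>x. \<Sum>n. ?f n x) has_field_derivative (\<Sum>n. ?f' n x)) (at x)"
    by (rule has_field_derivative_series'(2)[OF convex_UNIV d u, of 0]) (auto simp: summable_C summable_inv_den)
  moreover have "(\<Sum>n. ?f' n x) = - Sf m x / 2"
  proof -
    have "(\<Sum>n. ?f' n x) = - (\<Sum>n. sin (real (Suc n) * x) / den m n / 2)"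
      by (rule suminf_minus[OF summable_divide[OF summable_S]])
    also have "(\<Sum>n. sin (real (Suc n) * x) / den m n / 2) = Sf m x / 2"
      unfolding Sf_def by (rule suminf_divide[OF summable_S])
    finally show ?thesis by simp
  qed
  moreover have "Cf (Suc m) = (\<lambda>x. \<Sum>n. ?f n x)" by (rule ext) (simp only: Cf_def)
  ultimately show ?thesis by (simp only:)
qed

lemma Cf_per: "Cf m 0 = Cf m (2*pi)"
proof -
  have "cos (real (Suc n) * (2*pi)) = 1" for n
    using cos_2npi[of "Suc n"] by (simp add: algebra_simps)
  thus ?thesis unfolding Cf_def by simp
qed

lemma Sf_per: "Sf m 0 = Sf m (2*pi)"
proof -
  have "sin (real (Suc n) * (2*pi)) = 0" for n
    using sin_2npi[of "Suc n"] by (simp add: algebra_simps)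
  thus ?thesis unfolding Sf_def by simp
qed

definition tt :: "nat \<Rightarrow> real \<Rightarrow> real" where
  "tt j x = (-1) ^ (j + 1) * pi ^ (2 * j) / fact (2 * j) * bernoulli_poly (2 * j) (x / (2 * pi))"
definition uu :: "nat \<Rightarrow> real \<Rightarrow> real" where
  "uu j x = (-1) ^ (j + 1) * pi ^ (2 * j + 1) / fact (2 * j + 1) * bernoulli_poly (2 * j + 1) (x / (2 * pi))"

definition RC :: "nat \<Rightarrow> real \<Rightarrow> real" where
  "RC p x = 1 / 2 - pi / 4 * sin (x / 2) - 1 / 2 * (\<Sum>j = 1..p. tt j x)"
definition RS :: "nat \<Rightarrow> real \<Rightarrow> real" where
  "RS p x = pi / 4 * cos (x / 2) - 1 / 4 * (pi - x) - 1 / 2 * (\<Sum>j = 1..p. uu j x)"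

lemma bpx_deriv: "((\<lambda>x. bernoulli_poly (Suc n) (x / (2*pi))) has_real_derivative
    real (Suc n) * bernoulli_poly n (x / (2*pi)) * (1 / (2*pi))) (at x)"
  by (rule DERIV_chain2[OF bp_deriv]) (auto intro!: derivative_eq_intros)

lemma uu_deriv: "(uu j has_real_derivative tt j x / 2) (at x)"
proof -
  have "((\<lambda>x. (-1) ^ (j + 1) * pi ^ (2 * j + 1) / fact (2 * j + 1) * bernoulli_poly (Suc (2 * j)) (x / (2 * pi)))
     has_real_derivative (-1) ^ (j + 1) * pi ^ (2 * j + 1) / fact (2 * j + 1) *
        (real (Suc (2*j)) * bernoulli_poly (2*j) (x / (2*pi)) * (1 / (2*pi)))) (at x)"
    by (intro DERIV_cmult bpx_deriv)
  also have "(-1) ^ (j + 1) * pi ^ (2 * j + 1) / fact (2 * j + 1) *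
        (real (Suc (2*j)) * bernoulli_poly (2*j) (x / (2*pi)) * (1 / (2*pi))) = tt j x / 2"
  proof -
    have "(fact (2 * j + 1) :: real) = real (Suc (2*j)) * fact (2*j)" by simp
    thus ?thesis unfolding tt_def by (simp add: field_simps del: of_nat_Suc fact_Suc)
  qed
  finally show ?thesis unfolding uu_def[abs_def] by simp
qed

lemma tt_deriv: "(tt (Suc j) has_real_derivative - uu j x / 2) (at x)"
proof -
  have e: "2 * Suc j = Suc (2*j+1)" by simp
  have d: "((\<lambda>x. bernoulli_poly (2 * Suc j) (x / (2*pi))) has_real_derivative
    real (Suc (2*j+1)) * bernoulli_poly (2*j+1) (x / (2*pi)) * (1 / (2*pi))) (at x)"
    unfolding e by (rule bpx_deriv)
  have "(tt (Suc j) has_real_derivative (-1) ^ (Suc j + 1) * pi ^ (2 * Suc j) / fact (2 * Suc j) *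
        (real (Suc (2*j+1)) * bernoulli_poly (2*j+1) (x / (2*pi)) * (1 / (2*pi)))) (at x)"
    unfolding tt_def[abs_def] by (rule DERIV_cmult[OF d])
  also have "(-1) ^ (Suc j + 1) * pi ^ (2 * Suc j) / fact (2 * Suc j) *
        (real (Suc (2*j+1)) * bernoulli_poly (2*j+1) (x / (2*pi)) * (1 / (2*pi))) = - uu j x / 2"
  proof -
    have "(fact (2 * Suc j) :: real) = real (Suc (2*j+1)) * fact (2*j+1)"
      unfolding e by (rule fact_Suc)
    moreover have "pi ^ (2 * Suc j) = pi * pi ^ (2*j+1)" by simp
    ultimately show ?thesis unfolding uu_def by (simp add: field_simps del: of_nat_Suc fact_Suc)
  qed
  finally show ?thesis .
qed

lemma bp1': "bernoulli_poly (Suc 0) y = y - 1/2" using bp1 by simp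

lemma RS_deriv: "(RS p has_real_derivative RC p x / 2) (at x)"
proof -
  have d: "((\<lambda>x. \<Sum>j=1..p. uu j x) has_real_derivative (\<Sum>j=1..p. tt j x / 2)) (at x)"
    by (rule DERIV_sum) (rule uu_deriv)
  have a: "((\<lambda>x. pi / 4 * cos (x / 2) - 1 / 4 * (pi - x)) has_real_derivative - pi / 8 * sin (x / 2) + 1 / 4) (at x)"
    by (auto intro!: derivative_eq_intros)
  have "((\<lambda>x. pi / 4 * cos (x / 2) - 1 / 4 * (pi - x) - 1 / 2 * (\<Sum>j = 1..p. uu j x))
     has_real_derivative (- pi / 8 * sin (x / 2) + 1 / 4) - 1 / 2 * (\<Sum>j=1..p. tt j x / 2)) (at x)"
    by (rule DERIV_diff[OF a DERIV_cmult[OF d]])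
  also have "(- pi / 8 * sin (x / 2) + 1 / 4) - 1 / 2 * (\<Sum>j=1..p. tt j x / 2) = RC p x / 2"
    unfolding RC_def by (simp add: sum_divide_distrib[symmetric] algebra_simps)
  finally show ?thesis unfolding RS_def[abs_def] .
qed

lemma RC_Suc: "RC (Suc p) x = RC p x - 1/2 * tt (Suc p) x"
  unfolding RC_def by (simp add: algebra_simps)
lemma RS_Suc: "RS (Suc p) x = RS p x - 1/2 * uu (Suc p) x"
  unfolding RS_def by (simp add: algebra_simps)

lemma RC_deriv: "(RC (Suc p) has_real_derivative - RS p x / 2) (at x)"
proof (induction p arbitrary: x)
  case 0
  have e: "RC (Suc 0) = (\<lambda>x. 1 / 2 - pi / 4 * sin (x / 2) - 1 / 2 * tt (Suc 0) x)"
    by (rule ext) (simp add: RC_def)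
  have u0: "uu 0 x = - pi * (x / (2*pi) - 1/2)"
    unfolding uu_def by (simp add: bp1')
  have "((\<lambda>x. 1 / 2 - pi / 4 * sin (x / 2) - 1 / 2 * tt (Suc 0) x) has_real_derivative - RS 0 x / 2) (at x)"
    by (auto intro!: derivative_eq_intros tt_deriv simp: RS_def u0 field_simps)
  thus ?case unfolding e .
next
  case (Suc p)
  have e: "RC (Suc (Suc p)) = (\<lambda>x. RC (Suc p) x - 1/2 * tt (Suc (Suc p)) x)"
    by (rule ext) (rule RC_Suc)
  have "((\<lambda>x. RC (Suc p) x - 1/2 * tt (Suc (Suc p)) x) has_real_derivative - RS (Suc p) x / 2) (at x)"
    by (auto intro!: derivative_eq_intros tt_deriv Suc.IH simp: RS_Suc algebra_simps)
  thus ?case unfolding e .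
qed

lemma RC_per: "RC p 0 = RC p (2*pi)"
proof -
  have "tt j 0 = tt j (2*pi)" if "j \<in> {1..p}" for j
    using that bp_per[of "2*j"] by (simp add: tt_def)
  hence "(\<Sum>j=1..p. tt j 0) = (\<Sum>j=1..p. tt j (2*pi))" by (rule sum.cong[OF refl])
  thus ?thesis unfolding RC_def by simp
qed

lemma RS_per: "RS p 0 = RS p (2*pi)"
proof -
  have "uu j 0 = uu j (2*pi)" if "j \<in> {1..p}" for j
    using that bp_per[of "2*j+1"] by (simp add: uu_def)
  hence "(\<Sum>j=1..p. uu j 0) = (\<Sum>j=1..p. uu j (2*pi))" by (rule sum.cong[OF refl])
  thus ?thesis unfolding RS_def by simp
qed

lemma S_step:
  assumes h: "\<And>x. 0 < x \<Longrightarrow> x < 2*pi \<Longrightarrow> Cf (2*p) x = RC p x"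
  shows "\<And>x. 0 < x \<Longrightarrow> x < 2*pi \<Longrightarrow> Sf (Suc (2*p)) x = RS p x"
proof -
  let ?f = "\<lambda>x. Cf (Suc (Suc (2*p))) x - RC (Suc p) x"
  let ?g = "\<lambda>x. Sf (Suc (2*p)) x - RS p x"
  have df: "(?f has_real_derivative (-1/2) * ?g x) (at x)" for x
    by (rule DERIV_diff[OF Cf_deriv RC_deriv, THEN DERIV_cong]) (simp add: algebra_simps)
  have dg: "(?g has_real_derivative 0) (at x)" if "0 < x" "x < 2*pi" for x
    by (rule DERIV_diff[OF Sf_deriv RS_deriv, THEN DERIV_cong]) (simp add: h[OF that])
  have "?g x = 0" if "0 < x" "x < 2*pi" for x
    by (rule key[of ?f "-1/2" ?g, OF DERIV_isCont[OF df] _ df dg _ that]) (simp_all add: Cf_per RC_per)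
  thus "\<And>x. 0 < x \<Longrightarrow> x < 2*pi \<Longrightarrow> Sf (Suc (2*p)) x = RS p x" by simp
qed

lemma C_step:
  assumes h: "\<And>x. 0 < x \<Longrightarrow> x < 2*pi \<Longrightarrow> Sf (Suc (2*p)) x = RS p x"
  shows "\<And>x. 0 < x \<Longrightarrow> x < 2*pi \<Longrightarrow> Cf (2 * Suc p) x = RC (Suc p) x"
proof -
  let ?f = "\<lambda>x. Sf (Suc (Suc (Suc (2*p)))) x - RS (Suc p) x"
  let ?g = "\<lambda>x. Cf (Suc (Suc (2*p))) x - RC (Suc p) x"
  have df: "(?f has_real_derivative (1/2) * ?g x) (at x)" for x
    by (rule DERIV_diff[OF Sf_deriv RS_deriv, THEN DERIV_cong]) (simp add: algebra_simps)
  have dg: "(?g has_real_derivative 0) (at x)" if "0 < x" "x < 2*pi" for x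
    by (rule DERIV_diff[OF Cf_deriv RC_deriv, THEN DERIV_cong]) (simp add: h[OF that])
  have "?g x = 0" if "0 < x" "x < 2*pi" for x
    by (rule key[of ?f "1/2" ?g, OF DERIV_isCont[OF df] _ df dg _ that]) (simp_all add: Sf_per RS_per)
  thus "\<And>x. 0 < x \<Longrightarrow> x < 2*pi \<Longrightarrow> Cf (2 * Suc p) x = RC (Suc p) x" by simp
qed

lemma main_C:
  assumes base: "\<And>x. 0 < x \<Longrightarrow> x < 2*pi \<Longrightarrow> Cf 0 x = RC 0 x"
  shows "0 < x \<Longrightarrow> x < 2*pi \<Longrightarrow> Cf (2*p) x = RC p x"
proof (induction p arbitrary: x)
  case 0 thus ?case using base by simp
next
  case (Suc p)
  show ?case by (rule C_step[OF S_step[OF Suc.IH]]) (use Suc.prems in auto)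
qed

lemma odd_series:
  fixes w :: complex
  assumes w: "norm w < 1"
  shows "(\<lambda>k. w^(2*k+1) / of_nat (2*k+1)) sums ((Ln (1+w) - Ln (1-w)) / 2)"
proof -
  have a: "(\<lambda>n. (-1)^Suc n / of_nat n * w^n) sums Ln (1+w)" by (rule Ln_series[OF w])
  have b: "(\<lambda>n. (-1)^Suc n / of_nat n * (-w)^n) sums Ln (1+(-w))" by (rule Ln_series) (use w in simp)
  have c: "(\<lambda>n. (-1)^Suc n / of_nat n * w^n - (-1)^Suc n / of_nat n * (-w)^n) sums (Ln (1+w) - Ln (1-w))"
    using sums_diff[OF a b] by simp
  have g: "(\<lambda>n. \<Sum>i\<in>{n*2..<n*2+2}. (-1)^Suc i / of_nat i * w^i - (-1)^Suc i / of_nat i * (-w)^i)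
      sums (Ln (1+w) - Ln (1-w))"
    by (rule sums_group[OF c]) simp
  have t: "(\<Sum>i\<in>{n*2..<n*2+2}. (-1)^Suc i / of_nat i * w^i - (-1)^Suc i / of_nat i * (-w)^i)
     = 2 * (w^(2*n+1) / of_nat (2*n+1))" for n
  proof -
    have s: "{n*2..<n*2+2} = {2*n, 2*n+1}" by auto
    have "(-w)^(2*n) = w^(2*n)" by (simp add: power_mult)
    moreover have "(-w)^(2*n+1) = -(w^(2*n+1))" by (simp add: power_mult)
    moreover have "((-1::complex)^n)^2 = 1" by (simp add: power2_eq_square power_mult_distrib[symmetric])
    ultimately show ?thesis unfolding s by (simp add: power_mult field_simps)
  qed
  from g have "(\<lambda>n. 2 * (w^(2*n+1) / of_nat (2*n+1))) sums (Ln (1+w) - Ln (1-w))"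
    unfolding t .
  from sums_divide[OF this, of 2]
  have "(\<lambda>n. 2 * (w^(2*n+1) / of_nat (2*n+1)) / 2) sums ((Ln (1+w) - Ln (1-w)) / 2)" .
  also have "(\<lambda>n. 2 * (w^(2*n+1) / of_nat (2*n+1)) / 2) = (\<lambda>n. w^(2*n+1) / of_nat (2*n+1))"
    by (rule ext) (simp only: nonzero_mult_div_cancel_left[of 2] zero_neq_numeral[symmetric] not_False_eq_True)
  finally show ?thesis .
qed

lemma P_identity:
  fixes w :: complex
  assumes w: "norm w < 1" "w \<noteq> 0"
  shows "(\<lambda>k. w^(2*k+2) / (of_nat (2*k+1) * of_nat (2*k+3)))
           sums (1/2 * (1 + (w - 1/w) * ((Ln (1+w) - Ln (1-w)) / 2)))"
proof -
  define A where "A = (Ln (1+w) - Ln (1-w)) / 2"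
  define b where "b k = w^(2*k+1) / of_nat (2*k+1)" for k
  have o: "b sums A" unfolding b_def A_def by (rule odd_series[OF w(1)])
  have o2: "(\<lambda>k. b (k+1)) sums (A - w)"
    using sums_split_initial_segment[OF o, of 1] by (simp add: b_def)
  have d: "(\<lambda>k. 1/2 * (w * b k - (1/w) * b (k+1))) sums (1/2 * (w * A - (1/w) * (A - w)))"
    by (intro sums_mult sums_diff o o2)
  have t: "1/2 * (w * b k - (1/w) * b (k+1)) = w^(2*k+2) / (of_nat (2*k+1) * of_nat (2*k+3))" for k
  proof -
    have n1: "(of_nat (2*k+1) :: complex) \<noteq> 0" by (metis of_nat_eq_0_iff add_eq_0_iff_both_eq_0 one_neq_zero)
    have n3: "(of_nat (2*k+3) :: complex) \<noteq> 0" by (metis of_nat_eq_0_iff add_eq_0_iff_both_eq_0 zero_neq_numeral)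
    have e1: "w * b k = w^(2*k+2) / of_nat (2*k+1)" unfolding b_def by (simp add: field_simps)
    have e2: "(1/w) * b (k+1) = w^(2*k+2) / of_nat (2*k+3)"
    proof -
      have "w^(2*(k+1)+1) = w * w * w^(2*k+1)" by (simp add: algebra_simps power_add)
      moreover have "w^(2*k+2) = w * w^(2*k+1)" by (simp add: algebra_simps power_add)
      moreover have "2*(k+1)+1 = 2*k+3" by simp
      ultimately show ?thesis unfolding b_def using w(2) by (simp add: field_simps)
    qed
    have "(of_nat (2*k+3) :: complex) = of_nat (2*k+1) + 2" by simp
    hence "1/2 * (w^(2*k+2) / of_nat (2*k+1) - w^(2*k+2) / of_nat (2*k+3)) = w^(2*k+2) / (of_nat (2*k+1) * of_nat (2*k+3))"
      using n1 n3 by (simp add: field_simps)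
    thus ?thesis using e1 e2 by simp
  qed
  have v: "1/2 * (w * A - (1/w) * (A - w)) = 1/2 * (1 + (w - 1/w) * A)"
    using w(2) by (simp add: field_simps)
  show ?thesis using d unfolding t unfolding v unfolding A_def .
qed

definition Pt :: "nat \<Rightarrow> complex \<Rightarrow> complex" where
  "Pt k w = w^(2*k+2) / (of_nat (2*k+1) * of_nat (2*k+3))"
definition P :: "complex \<Rightarrow> complex" where
  "P w = (\<Sum>k. Pt k w)"

lemma den0: "den 0 k = real (2*k+1) * real (2*k+3)"
  unfolding den_def by (simp add: algebra_simps)

lemma Pt_bound: "norm w \<le> 1 \<Longrightarrow> norm (Pt k w) \<le> 1 / den 0 k"
proof -
  assume w: "norm w \<le> 1"
  have n: "norm (of_nat (2*k+1) * of_nat (2*k+3) :: complex) = real (2*k+1) * real (2*k+3)"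
    by (simp only: norm_mult norm_of_nat)
  have "norm (Pt k w) = norm w ^ (2*k+2) / (real (2*k+1) * real (2*k+3))"
    unfolding Pt_def by (simp only: norm_divide norm_power n)
  also have "\<dots> \<le> 1 / (real (2*k+1) * real (2*k+3))"
    by (rule divide_right_mono[OF power_le_one]) (use w in auto)
  finally show ?thesis unfolding den0 .
qed

lemma P_sums: "norm w \<le> 1 \<Longrightarrow> (\<lambda>k. Pt k w) sums P w"
  unfolding P_def
  by (rule summable_sums, rule summable_comparison_test[OF _ summable_inv_den[of 0]])
     (use Pt_bound in blast)

lemma P_cont: "continuous_on (cball 0 1) P"
proof (rule uniform_limit_theorem[where F = sequentially])
  show "\<forall>\<^sub>F n in sequentially. continuous_on (cball 0 1) (\<lambda>w. \<Sum>i<n. Pt i w)"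
  proof -
    have nz: "(of_nat (2*k+1) * of_nat (2*k+3) :: complex) \<noteq> 0" for k
      by (simp only: of_nat_mult[symmetric] of_nat_eq_0_iff) simp
    show ?thesis unfolding Pt_def
      by (intro always_eventually allI continuous_on_sum ballI continuous_on_divide continuous_on_power
          continuous_on_id continuous_on_const nz)
  qed
  show "uniform_limit (cball 0 1) (\<lambda>n w. \<Sum>i<n. Pt i w) P sequentially"
    unfolding P_def[abs_def]
    by (rule Weierstrass_m_test[OF _ summable_inv_den[of 0]]) (auto intro: Pt_bound)
qed simp

lemma ImL:
  fixes t :: real
  assumes t: "0 < t" "t < pi"
  shows "Im (Ln (1 + cis t)) - Im (Ln (1 - cis t)) = pi / 2"
proof -
  have s: "sin t > 0" using sin_gt_zero[OF t] .
  have sc: "(sin t)^2 + (cos t)^2 = 1" by simp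
  have c1: "cos t < 1" "cos t > -1"
  proof -
    have "(cos t)^2 < 1" using s sc by (smt (verit) zero_less_power)
    hence "\<bar>cos t\<bar> < 1" by (simp add: abs_square_less_1)
    thus "cos t < 1" "cos t > -1" by auto
  qed
  define a where "a = sin t / (1 + cos t)"
  have a: "a > 0" unfolding a_def using s c1 by simp
  have nz1: "1 + cis t \<noteq> 0" using s by (auto simp: complex_eq_iff)
  have nz2: "1 - cis t \<noteq> 0" using s by (auto simp: complex_eq_iff)
  have i1: "Im (Ln (1 + cis t)) = arctan a"
    using Im_Ln_eq[OF nz1] c1 unfolding a_def by simp
  have i2: "Im (Ln (1 - cis t)) = arctan (- (sin t / (1 - cos t)))"
    using Im_Ln_eq[OF nz2] c1 by simp
  have inv: "sin t / (1 - cos t) = 1 / a"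
  proof -
    have "sin t * sin t = (1 - cos t) * (1 + cos t)" using sc by (simp add: power2_eq_square algebra_simps)
    thus ?thesis unfolding a_def using c1 s by (simp add: field_simps)
  qed
  have "arctan (1 / a) = pi / 2 - arctan a" using arctan_inverse[of a] a by (simp add: inverse_eq_divide)
  thus ?thesis unfolding i1 i2 inv arctan_minus by simp
qed

definition R :: "complex \<Rightarrow> complex" where
  "R w = 1/2 * (1 + (w - 1/w) * ((Ln (1+w) - Ln (1-w)) / 2))"

lemma base:
  assumes x: "0 < x" "x < 2*pi"
  shows "Cf 0 x = RC 0 x"
proof -
  define t where "t = x / 2"
  have t: "0 < t" "t < pi" using x unfolding t_def by auto
  define w0 where "w0 = cis t"
  have nw0: "norm w0 = 1" unfolding w0_def by simp
  have st: "sin t > 0" using sin_gt_zero[OF t] .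
  define s where "s n = 1 - inverse (real (Suc n)) / 2" for n
  have s01: "0 < s n" "s n < 1" for n
  proof -
    have "inverse (real (Suc n)) \<le> 1" "inverse (real (Suc n)) > 0" by (auto simp: inverse_le_1_iff)
    thus "0 < s n" "s n < 1" unfolding s_def by auto
  qed
  have slim: "s \<longlonglongrightarrow> 1"
    unfolding s_def using tendsto_diff[OF tendsto_const tendsto_divide[OF LIMSEQ_inverse_real_of_nat tendsto_const]]
    by fastforce
  define ws where "ws n = complex_of_real (s n) * w0" for n
  have nws: "norm (ws n) = s n" for n unfolding ws_def using s01[of n] nw0 by (simp add: norm_mult)
  have wslim: "ws \<longlonglongrightarrow> w0"
    unfolding ws_def using tendsto_mult[OF tendsto_of_real[OF slim] tendsto_const[of w0]] by simp
  have eq: "P (ws n) = R (ws n)" for n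
  proof -
    have "norm (ws n) < 1" "ws n \<noteq> 0" using nws[of n] s01[of n] by auto
    from P_identity[OF this] have "(\<lambda>k. Pt k (ws n)) sums R (ws n)" unfolding Pt_def R_def by simp
    moreover have "(\<lambda>k. Pt k (ws n)) sums P (ws n)" using P_sums nws[of n] s01[of n] by simp
    ultimately show ?thesis using sums_unique2 by blast
  qed
  have l1: "(\<lambda>n. P (ws n)) \<longlonglongrightarrow> P w0"
    by (rule continuous_on_tendsto_compose[OF P_cont wslim]) (use nw0 nws s01 in \<open>auto intro!: always_eventually less_imp_le\<close>)
  have nr1: "1 + w0 \<notin> \<real>\<^sub>\<le>\<^sub>0" "1 - w0 \<notin> \<real>\<^sub>\<le>\<^sub>0" "w0 \<noteq> 0"
    using st nw0 unfolding w0_def by (auto simp: complex_nonpos_Reals_iff)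
  have "isCont R w0" unfolding R_def[abs_def] using nr1 by (intro continuous_intros) auto
  hence l2: "(\<lambda>n. R (ws n)) \<longlonglongrightarrow> R w0" by (rule isCont_tendsto_compose[OF _ wslim])
  have PR: "P w0 = R w0" using LIMSEQ_unique[OF l1] l2 unfolding eq by blast
  have "(\<lambda>k. Re (Pt k w0)) sums Re (P w0)" using sums_Re[OF P_sums] nw0 by simp
  moreover have "Re (Pt k w0) = cos (real (Suc k) * x) / den 0 k" for k
  proof -
    have "w0 ^ (2*k+2) = cis (real (2*k+2) * t)" by (simp only: w0_def Complex.DeMoivre)
    also have "real (2*k+2) * t = real (Suc k) * x" by (simp add: t_def algebra_simps)
    finally have "w0 ^ (2*k+2) = cis (real (Suc k) * x)" .
    moreover have "(of_nat (2*k+1) * of_nat (2*k+3) :: complex) = complex_of_real (den 0 k)"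
      unfolding den0 by simp
    ultimately show ?thesis unfolding Pt_def by (simp add: Re_divide_of_real)
  qed
  ultimately have "(\<lambda>k. cos (real (Suc k) * x) / den 0 k) sums Re (P w0)" by simp
  hence "Cf 0 x = Re (P w0)" unfolding Cf_def by (rule sums_unique[symmetric])
  also have "\<dots> = Re (R w0)" using PR by simp
  also have "\<dots> = 1/2 - pi/4 * sin t"
  proof -
    have "w0 - 1/w0 = 2 * \<i> * sin t" unfolding w0_def
      by (simp add: divide_inverse cis_inverse complex_eq_iff)
    hence "R w0 = 1/2 * (1 + (2 * \<i> * sin t) * ((Ln (1+w0) - Ln (1-w0)) / 2))" unfolding R_def by (simp only:)
    also have "1/2 * (1 + (2 * \<i> * sin t) * ((Ln (1+w0) - Ln (1-w0)) / 2))
        = 1/2 + \<i> * (complex_of_real (sin t / 2) * (Ln (1+w0) - Ln (1-w0)))"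
      by (simp add: field_simps)
    finally have "Re (R w0) = Re (1/2 + \<i> * (complex_of_real (sin t / 2) * (Ln (1+w0) - Ln (1-w0))))"
      by (simp only:)
    hence "Re (R w0) = 1/2 - sin t / 2 * (Im (Ln (1+w0)) - Im (Ln (1-w0)))" by simp
    also have "\<dots> = 1/2 - pi/4 * sin t" unfolding w0_def ImL[OF t] by simp
    finally show ?thesis .
  qed
  finally show ?thesis unfolding RC_def t_def by simp
qed

theorem corollary7:
  fixes p :: nat and x :: real
  assumes "0 < x" and "x < 2 * pi"
  shows "(\<lambda>n. cos (real (Suc n) * x) /
            ((2 * real (Suc n) - 1) * (2 * real (Suc n)) ^ (2 * p) * (2 * real (Suc n) + 1)))
         sums (1 / 2 - pi / 4 * sin (x / 2)
               - 1 / 2 * (\<Sum>j = 1..p. (-1) ^ (j + 1) * pi ^ (2 * j) / fact (2 * j)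
                                      * bernoulli_poly (2 * j) (x / (2 * pi))))
       \<and> (\<lambda>n. sin (real (Suc n) * x) /
            ((2 * real (Suc n) - 1) * (2 * real (Suc n)) ^ (2 * p + 1) * (2 * real (Suc n) + 1)))
         sums (pi / 4 * cos (x / 2) - 1 / 4 * (pi - x)
               - 1 / 2 * (\<Sum>j = 1..p. (-1) ^ (j + 1) * pi ^ (2 * j + 1) / fact (2 * j + 1)
                                      * bernoulli_poly (2 * j + 1) (x / (2 * pi))))"
proof -
  have hC: "Cf (2*p) x = RC p x" by (rule main_C[OF base]) (use assms in auto)
  have hS: "Sf (Suc (2*p)) x = RS p x" by (rule S_step[OF main_C[OF base]]) (use assms in auto)
  have "(\<lambda>n. cos (real (Suc n) * x) / den (2*p) n) sums Cf (2*p) x"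
    unfolding Cf_def by (rule summable_sums[OF summable_C])
  hence c: "(\<lambda>n. cos (real (Suc n) * x) / den (2*p) n) sums RC p x" by (simp only: hC)
  have "(\<lambda>n. sin (real (Suc n) * x) / den (Suc (2*p)) n) sums Sf (Suc (2*p)) x"
    unfolding Sf_def by (rule summable_sums[OF summable_S])
  hence s: "(\<lambda>n. sin (real (Suc n) * x) / den (Suc (2*p)) n) sums RS p x" by (simp only: hS)
  show ?thesis using c s unfolding den_def RC_def RS_def tt_def uu_def by simp
qed

end
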